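(* Let $\Omega$ be a topological signature, $X$ a topological space, and $\mathcal B$ a Boolean subalgebra of $\mathcal P(T_\Omega(X))$ satisfying condition $(\ast)$. For $w\in\Omega_n$ and ultrafilters $U_1,\dots,U_n$ of $\mathcal B$, let $w(U_1,\dots,U_n)$ be the set of all $L\in\mathcal B$ for which there are $L_i\in U_i$ ($i=1,\dots,n$) with $w(L_1,\dots,L_n)\subseteq L$ (here $w(L_1,\dots,L_n)=\{w(t_1,\dots,t_n):t_i\in L_i\}$). Then each $w(U_1,\dots,U_n)$ is an ultrafilter of $\mathcal B$, and the evaluation maps $(w,U_1,\dots,U_n)\mapsto w(U_1,\dots,U_n)$ make the Stone dual space $\mathcal B^\star$ a Stone topological $\Omega$-algebra. Moreover, if every $L\in\mathcal B$ is such that $L\cap X$ is open in $X$, then the map $X\to\mathcal B^\star$, $x\mapsto U_x=\{L\in\mathcal B:x\in L\}$, is a generating mapping.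
   Context: $T_\Omega(X)$ is the term algebra on $X$: finite ordered trees with leaves labeled in $X\uplus\Omega_0$ and nodes with $k$ children labeled in $\Omega_k$, topologized as the topological sum over tree shapes of products of label spaces; $X$ is identified with single-node trees; $E_n:\Omega_n\times T_\Omega(X)^n\to T_\Omega(X)$ is its evaluation map. $\mathcal P(S)$ is the Boolean algebra of all subsets of $S$, and $\mathcal P_{co}(S)$ that of clopen subsets of a space $S$. For a Boolean subalgebra $\mathcal B$ of $\mathcal P(T_\Omega(X))$, let $\mathcal B'_n$ be the Boolean subalgebra of $\mathcal P(\Omega_n\times T_\Omega(X)^n)$ generated by all sets $K\times L_1\times\cdots\times L_n$ with $K$ clopen in $\Omega_n$ and $L_i\in\mathcal B$. Condition $(\ast)$: for every $n$ and every $L\in\mathcal B$, $E_n^{-1}(L)\in\mathcal B'_n$. $\mathcal B^\star$ is the set of ultrafilters of $\mathcal B$ with basic open sets $\{U: L\in U\}$, $L\in\mathcal B$. A Stone topological algebra is a compact Hausdorff 0-dimensional space with continuous evaluation maps $\Omega_n\times A^n\to A$. A generating mapping is a continuous map $X\to A$ whose image generates a dense subalgebra of $A$. *)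

theory Defs
  imports "HOL-Analysis.Analysis"
begin

datatype ('f,'x) otrm = Var 'x | App 'f "('f,'x) otrm list"

text \<open>A topological signature is a family Om :: nat => 'f topology, Om n being the
  space of n-ary symbols.  The term algebra carrier T_Om(X):\<close>
inductive_set terms :: "(nat \<Rightarrow> 'f topology) \<Rightarrow> 'x topology \<Rightarrow> ('f,'x) otrm set"
  for Om X where
  var: "x \<in> topspace X \<Longrightarrow> Var x \<in> terms Om X"
| app: "w \<in> topspace (Om (length ts)) \<Longrightarrow> \<forall>t\<in>set ts. t \<in> terms Om X \<Longrightarrow> App w ts \<in> terms Om X"

definition boolean_subalgebra :: "'a set \<Rightarrow> 'a set set \<Rightarrow> bool" where
  "boolean_subalgebra S B \<longleftrightarrow> B \<subseteq> Pow S \<and> {} \<in> B \<and> S \<in> B \<and>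
     (\<forall>L\<in>B. S - L \<in> B) \<and> (\<forall>L\<in>B. \<forall>M\<in>B. L \<inter> M \<in> B \<and> L \<union> M \<in> B)"

definition boolean_generated :: "'a set \<Rightarrow> 'a set set \<Rightarrow> 'a set set" where
  "boolean_generated S G = \<Inter>{B. boolean_subalgebra S B \<and> G \<subseteq> B}"

text \<open>The space Om_n x T^n, with tuples represented as lists of length n.\<close>
definition op_domain :: "(nat \<Rightarrow> 'f topology) \<Rightarrow> 'x topology \<Rightarrow> nat \<Rightarrow> ('f \<times> ('f,'x) otrm list) set" where
  "op_domain Om X n = {(w, ts). w \<in> topspace (Om n) \<and> length ts = n \<and> set ts \<subseteq> terms Om X}"

definition B_prime :: "(nat \<Rightarrow> 'f topology) \<Rightarrow> 'x topology \<Rightarrow> ('f,'x) otrm set set \<Rightarrow> nat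
    \<Rightarrow> ('f \<times> ('f,'x) otrm list) set set" where
  "B_prime Om X B n = boolean_generated (op_domain Om X n)
     {{(w, ts) \<in> op_domain Om X n. w \<in> K \<and> (\<forall>i<n. ts ! i \<in> Ls ! i)} | K Ls.
        closedin (Om n) K \<and> openin (Om n) K \<and> length Ls = n \<and> set Ls \<subseteq> B}"

text \<open>Condition (*): E_n^{-1}(L) belongs to B'_n.\<close>
definition cond_star :: "(nat \<Rightarrow> 'f topology) \<Rightarrow> 'x topology \<Rightarrow> ('f,'x) otrm set set \<Rightarrow> bool" where
  "cond_star Om X B \<longleftrightarrow> (\<forall>n. \<forall>L\<in>B.
     {(w, ts) \<in> op_domain Om X n. App w ts \<in> L} \<in> B_prime Om X B n)"

definition ultrafilter_of :: "'a set \<Rightarrow> 'a set set \<Rightarrow> 'a set set \<Rightarrow> bool" where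
  "ultrafilter_of S B U \<longleftrightarrow> U \<subseteq> B \<and> S \<in> U \<and> {} \<notin> U \<and>
     (\<forall>L\<in>U. \<forall>M\<in>B. L \<subseteq> M \<longrightarrow> M \<in> U) \<and>
     (\<forall>L\<in>U. \<forall>M\<in>U. L \<inter> M \<in> U) \<and>
     (\<forall>L\<in>B. L \<in> U \<or> S - L \<in> U)"

definition stone_dual :: "'a set \<Rightarrow> 'a set set \<Rightarrow> 'a set set topology" where
  "stone_dual S B = topology_generated_by
     {{U. ultrafilter_of S B U \<and> L \<in> U} | L. L \<in> B}"

definition ult_eval :: "('f,'x) otrm set set \<Rightarrow> 'f \<Rightarrow> ('f,'x) otrm set set list \<Rightarrow> ('f,'x) otrm set set" where
  "ult_eval B w Us = {L \<in> B. \<exists>Ls. length Ls = length Us \<and> (\<forall>i<length Us. Ls ! i \<in> Us ! i) \<and>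
      {App w ts | ts. length ts = length Us \<and> (\<forall>i<length Us. ts ! i \<in> Ls ! i)} \<subseteq> L}"

text \<open>Stone topological Om-algebra with carrier topspace A and evaluation ev;
  A^n is the product topology over the index set {..<n}.\<close>
definition stone_top_algebra :: "(nat \<Rightarrow> 'f topology) \<Rightarrow> 'a topology \<Rightarrow> ('f \<Rightarrow> 'a list \<Rightarrow> 'a) \<Rightarrow> bool" where
  "stone_top_algebra Om A ev \<longleftrightarrow> compact_space A \<and> Hausdorff_space A \<and> A dim_le 0 \<and>
     (\<forall>n. continuous_map (prod_topology (Om n) (product_topology (\<lambda>_. A) {..<n})) A
            (\<lambda>(w, f). ev w (map f [0..<n])))"

inductive_set gen_subalg :: "(nat \<Rightarrow> 'f topology) \<Rightarrow> ('f \<Rightarrow> 'a list \<Rightarrow> 'a) \<Rightarrow> 'a set \<Rightarrow> 'a set"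
  for Om ev G where
  base: "a \<in> G \<Longrightarrow> a \<in> gen_subalg Om ev G"
| op: "w \<in> topspace (Om (length as)) \<Longrightarrow> \<forall>a\<in>set as. a \<in> gen_subalg Om ev G \<Longrightarrow> ev w as \<in> gen_subalg Om ev G"

definition generating_map :: "(nat \<Rightarrow> 'f topology) \<Rightarrow> 'x topology \<Rightarrow> 'a topology \<Rightarrow> ('f \<Rightarrow> 'a list \<Rightarrow> 'a)
    \<Rightarrow> ('x \<Rightarrow> 'a) \<Rightarrow> bool" where
  "generating_map Om X A ev g \<longleftrightarrow> continuous_map X A g \<and>
     A closure_of (gen_subalg Om ev (g ` topspace X)) = topspace A"

end

theory Submission
  imports Defs
begin


context
  fixes S :: "'a set" and B :: "'a set set"
  assumes BA: "boolean_subalgebra S B"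
begin

lemma BA_sub: "L \<in> B \<Longrightarrow> L \<subseteq> S" using BA unfolding boolean_subalgebra_def by auto
lemma BA_S: "S \<in> B" using BA unfolding boolean_subalgebra_def by auto
lemma BA_empty: "{} \<in> B" using BA unfolding boolean_subalgebra_def by auto
lemma BA_diff: "L \<in> B \<Longrightarrow> S - L \<in> B" using BA unfolding boolean_subalgebra_def by auto
lemma BA_Int: "L \<in> B \<Longrightarrow> M \<in> B \<Longrightarrow> L \<inter> M \<in> B" using BA unfolding boolean_subalgebra_def by auto
lemma BA_Un: "L \<in> B \<Longrightarrow> M \<in> B \<Longrightarrow> L \<union> M \<in> B" using BA unfolding boolean_subalgebra_def by auto

lemma uf_B: "ultrafilter_of S B U \<Longrightarrow> L \<in> U \<Longrightarrow> L \<in> B"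
  unfolding ultrafilter_of_def by auto
lemma uf_S: "ultrafilter_of S B U \<Longrightarrow> S \<in> U"
  unfolding ultrafilter_of_def by auto
lemma uf_ne: "ultrafilter_of S B U \<Longrightarrow> L \<in> U \<Longrightarrow> L \<noteq> {}"
  unfolding ultrafilter_of_def by auto
lemma uf_up: "ultrafilter_of S B U \<Longrightarrow> L \<in> U \<Longrightarrow> M \<in> B \<Longrightarrow> L \<subseteq> M \<Longrightarrow> M \<in> U"
  unfolding ultrafilter_of_def by auto
lemma uf_Int: "ultrafilter_of S B U \<Longrightarrow> L \<in> U \<Longrightarrow> M \<in> U \<Longrightarrow> L \<inter> M \<in> U"
  unfolding ultrafilter_of_def by blast
lemma uf_compl: "ultrafilter_of S B U \<Longrightarrow> L \<in> B \<Longrightarrow> S - L \<in> U \<longleftrightarrow> L \<notin> U"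
proof -
  assume U: "ultrafilter_of S B U" and L: "L \<in> B"
  show ?thesis
  proof
    assume "S - L \<in> U"
    show "L \<notin> U"
    proof
      assume "L \<in> U"
      then have "L \<inter> (S - L) \<in> U" using uf_Int[OF U] \<open>S - L \<in> U\<close> by blast
      then show False using uf_ne[OF U] by blast
    qed
  next
    assume "L \<notin> U" then show "S - L \<in> U" using U L unfolding ultrafilter_of_def by blast
  qed
qed

lemma uf_max: "ultrafilter_of S B U \<Longrightarrow> ultrafilter_of S B V \<Longrightarrow> U \<subseteq> V \<Longrightarrow> U = V"
proof -
  assume U: "ultrafilter_of S B U" and V: "ultrafilter_of S B V" and sub: "U \<subseteq> V"
  show "U = V"
  proof (rule ccontr)
    assume "U \<noteq> V"
    then obtain L where "L \<in> V" "L \<notin> U" using sub by blast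
    then have "L \<in> B" using uf_B[OF V] by blast
    then have "S - L \<in> U" using uf_compl[OF U] \<open>L \<notin> U\<close> by blast
    then have "S - L \<in> V" using sub by blast
    then show False using uf_compl[OF V \<open>L \<in> B\<close>] \<open>L \<in> V\<close> by blast
  qed
qed

lemma BA_fin_Inter: "finite F \<Longrightarrow> F \<subseteq> B \<Longrightarrow> S \<inter> \<Inter>F \<in> B"
proof (induction F rule: finite_induct)
  case empty then show ?case using BA_S by simp
next
  case (insert x F)
  have eq: "S \<inter> \<Inter>(insert x F) = x \<inter> (S \<inter> \<Inter>F)" by blast
  have "x \<in> B" "S \<inter> \<Inter>F \<in> B" using insert by auto
  then have "x \<inter> (S \<inter> \<Inter>F) \<in> B" by (rule BA_Int)
  then show ?case by (simp only: eq)
qed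

lemma uf_fin_Inter: assumes U: "ultrafilter_of S B U" shows "finite F \<Longrightarrow> F \<subseteq> U \<Longrightarrow> S \<inter> \<Inter>F \<in> U"
proof (induction F rule: finite_induct)
  case empty then show ?case using uf_S[OF U] by simp
next
  case (insert x F)
  have eq: "S \<inter> \<Inter>(insert x F) = x \<inter> (S \<inter> \<Inter>F)" by blast
  have "x \<in> U" "S \<inter> \<Inter>F \<in> U" using insert by auto
  then have "x \<inter> (S \<inter> \<Inter>F) \<in> U" by (rule uf_Int[OF U])
  then show ?case by (simp only: eq)
qed

definition FIP :: "'a set set \<Rightarrow> bool" where
  "FIP F \<longleftrightarrow> (\<forall>F'. finite F' \<and> F' \<subseteq> F \<longrightarrow> S \<inter> \<Inter>F' \<noteq> {})"

lemma FIP_D: "FIP F \<Longrightarrow> finite F' \<Longrightarrow> F' \<subseteq> F \<Longrightarrow> S \<inter> \<Inter>F' \<noteq> {}"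
  unfolding FIP_def by blast

lemma chain_finite_sub:
  assumes "C \<in> chains A" "C \<noteq> {}" "finite F" "F \<subseteq> \<Union>C"
  shows "\<exists>X\<in>C. F \<subseteq> X"
  using assms(3,4)
proof (induction F rule: finite_induct)
  case empty then show ?case using assms(2) by blast
next
  case (insert x F)
  have "F \<subseteq> \<Union>C" using insert.prems by simp
  then obtain X where X: "X \<in> C" "F \<subseteq> X" using insert.IH by blast
  have "x \<in> \<Union>C" using insert.prems by simp
  then obtain Y where Y: "Y \<in> C" "x \<in> Y" by blast
  have "X \<subseteq> Y \<or> Y \<subseteq> X" using chainsD[OF assms(1) X(1) Y(1)] .
  then show ?case using X Y by blast
qed

lemma uf_exists:
  assumes G: "G \<subseteq> B" and fip: "FIP G"
  shows "\<exists>U. ultrafilter_of S B U \<and> G \<subseteq> U"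
proof -
  define A where "A = {F. G \<subseteq> F \<and> F \<subseteq> B \<and> FIP F}"
  have "\<forall>C\<in>chains A. \<exists>U\<in>A. \<forall>X\<in>C. X \<subseteq> U"
  proof
    fix C assume C: "C \<in> chains A"
    show "\<exists>U\<in>A. \<forall>X\<in>C. X \<subseteq> U"
    proof (cases "C = {}")
      case True then show ?thesis using G fip unfolding A_def by blast
    next
      case False
      have CA: "C \<subseteq> A" using chainsD2[OF C] .
      have "\<Union>C \<in> A" unfolding A_def
      proof (intro CollectI conjI)
        show "G \<subseteq> \<Union>C" using False CA unfolding A_def by blast
        show "\<Union>C \<subseteq> B" using CA unfolding A_def by blast
        show "FIP (\<Union>C)" unfolding FIP_def
        proof (intro allI impI)
          fix F' assume "finite F' \<and> F' \<subseteq> \<Union>C"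
          then obtain X where "X \<in> C" "F' \<subseteq> X" using chain_finite_sub[OF C False] by blast
          then show "S \<inter> \<Inter>F' \<noteq> {}" using CA \<open>finite F' \<and> F' \<subseteq> \<Union>C\<close>
            unfolding A_def FIP_def by blast
        qed
      qed
      then show ?thesis by blast
    qed
  qed
  from Zorn_Lemma2[OF this] obtain M where M: "M \<in> A" and maxM: "\<forall>X\<in>A. M \<subseteq> X \<longrightarrow> X = M"
    by blast
  have MB: "M \<subseteq> B" and GM: "G \<subseteq> M" and fM: "FIP M" using M unfolding A_def by auto
  have ins: "N \<in> M" if "N \<in> B" "FIP (insert N M)" for N
  proof -
    have "insert N M \<in> A" using that MB GM unfolding A_def by blast
    then have "insert N M = M" using maxM by blast
    then show ?thesis by blast
  qed
  have dich: "L \<in> M \<or> S - L \<in> M" if L: "L \<in> B" for L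
  proof (rule ccontr)
    assume nn: "\<not> (L \<in> M \<or> S - L \<in> M)"
    have "\<not> FIP (insert L M)" using ins L nn by blast
    then obtain F1 where F1: "finite F1" "F1 \<subseteq> insert L M" "S \<inter> \<Inter>F1 = {}" unfolding FIP_def by blast
    have "\<not> FIP (insert (S - L) M)" using ins BA_diff[OF L] nn by blast
    then obtain F2 where F2: "finite F2" "F2 \<subseteq> insert (S - L) M" "S \<inter> \<Inter>F2 = {}" unfolding FIP_def by blast
    define F where "F = (F1 - {L}) \<union> (F2 - {S - L})"
    have "finite F" "F \<subseteq> M" using F1 F2 unfolding F_def by auto
    then have "S \<inter> \<Inter>F \<noteq> {}" using fM unfolding FIP_def by blast
    then obtain x where x: "x \<in> S" "x \<in> \<Inter>F" by blast
    show False
    proof (cases "x \<in> L")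
      case True
      then have "x \<in> S \<inter> \<Inter>F1" using x unfolding F_def by blast
      then show False using F1 by blast
    next
      case False
      then have "x \<in> S \<inter> \<Inter>F2" using x unfolding F_def by blast
      then show False using F2 by blast
    qed
  qed
  have emp: "{} \<notin> M"
  proof
    assume "{} \<in> M"
    then have "S \<inter> \<Inter>{{}} \<noteq> {}" using FIP_D[OF fM, of "{{}}"] by simp
    then show False by simp
  qed
  have "ultrafilter_of S B M" unfolding ultrafilter_of_def
  proof (intro conjI ballI impI)
    show "M \<subseteq> B" by fact
    show "{} \<notin> M" by fact
    show "S \<in> M" using dich[OF BA_S] emp by simp
  next
    fix L N assume L: "L \<in> M" and N: "N \<in> B" and LN: "L \<subseteq> N"
    show "N \<in> M"
    proof (rule ccontr)
      assume "N \<notin> M"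
      then have "S - N \<in> M" using dich N by blast
      then have "S \<inter> \<Inter>{L, S - N} \<noteq> {}" using FIP_D[OF fM, of "{L, S - N}"] L by simp
      then show False using LN by blast
    qed
  next
    fix L N assume L: "L \<in> M" and N: "N \<in> M"
    show "L \<inter> N \<in> M"
    proof (rule ccontr)
      assume "L \<inter> N \<notin> M"
      then have "S - (L \<inter> N) \<in> M" using dich BA_Int L N MB by blast
      then have "S \<inter> \<Inter>{L, N, S - (L \<inter> N)} \<noteq> {}" using FIP_D[OF fM, of "{L, N, S - (L \<inter> N)}"] L N by simp
      then show False by blast
    qed
  next
    fix L assume "L \<in> B" then show "L \<in> M \<or> S - L \<in> M" using dich by blast
  qed
  then show ?thesis using GM by blast
qed

lemma uf_compactness:
  assumes C: "C \<subseteq> B" and cov: "\<forall>V. ultrafilter_of S B V \<longrightarrow> (\<exists>L\<in>C. L \<in> V)"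
  shows "\<exists>C'. finite C' \<and> C' \<subseteq> C \<and> (\<forall>V. ultrafilter_of S B V \<longrightarrow> (\<exists>L\<in>C'. L \<in> V))"
proof (rule ccontr)
  assume no: "\<not> ?thesis"
  define G where "G = (\<lambda>L. S - L) ` C"
  have GB: "G \<subseteq> B" using C BA_diff unfolding G_def by blast
  have "FIP G" unfolding FIP_def
  proof (intro allI impI)
    fix F' assume F': "finite F' \<and> F' \<subseteq> G"
    then obtain F where F: "F \<subseteq> C" "finite F" "F' = (\<lambda>L. S - L) ` F"
      unfolding G_def by (meson finite_subset_image)
    have "\<not> (\<forall>V. ultrafilter_of S B V \<longrightarrow> (\<exists>L\<in>F. L \<in> V))" using no F(1,2) by blast
    then obtain V where V: "ultrafilter_of S B V" "\<forall>L\<in>F. L \<notin> V" by blast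
    have "F' \<subseteq> V"
    proof
      fix x assume "x \<in> F'"
      then obtain L where "L \<in> F" "x = S - L" using F(3) by blast
      then show "x \<in> V" using uf_compl[OF V(1), of L] V(2) F(1) C by blast
    qed
    then have "S \<inter> \<Inter>F' \<in> V" using uf_fin_Inter[OF V(1)] F' by blast
    then show "S \<inter> \<Inter>F' \<noteq> {}" using uf_ne[OF V(1)] by blast
  qed
  then obtain U where U: "ultrafilter_of S B U" "G \<subseteq> U" using uf_exists[OF GB] by blast
  then obtain L where "L \<in> C" "L \<in> U" using cov by blast
  then have "S - L \<in> U" using U unfolding G_def by blast
  then show False using uf_compl[OF U(1)] C \<open>L \<in> C\<close> \<open>L \<in> U\<close> by blast
qed


lemma sd_topspace: "topspace (stone_dual S B) = {U. ultrafilter_of S B U}"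
  unfolding stone_dual_def topology_generated_by_topspace
  using uf_S BA_S by blast

lemma sd_basic_open: "L \<in> B \<Longrightarrow> openin (stone_dual S B) {U. ultrafilter_of S B U \<and> L \<in> U}"
  unfolding stone_dual_def by (rule topology_generated_by_Basis) blast

lemma sd_basis:
  assumes "openin (stone_dual S B) W0" "U \<in> W0"
  shows "\<exists>L\<in>B. L \<in> U \<and> {V. ultrafilter_of S B V \<and> L \<in> V} \<subseteq> W0"
proof -
  have "generate_topology_on {{U. ultrafilter_of S B U \<and> L \<in> U} | L. L \<in> B} W0"
    using assms(1) unfolding stone_dual_def by (rule openin_topology_generated_by)
  moreover have "ultrafilter_of S B U"
    using openin_subset[OF assms(1)] assms(2) sd_topspace by blast
  ultimately show ?thesis using assms(2)
  proof (induction arbitrary: U)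
    case Empty then show ?case by simp
  next
    case (Int a b)
    then obtain L1 where L1: "L1 \<in> B" "L1 \<in> U" "{V. ultrafilter_of S B V \<and> L1 \<in> V} \<subseteq> a" by blast
    obtain L2 where L2: "L2 \<in> B" "L2 \<in> U" "{V. ultrafilter_of S B V \<and> L2 \<in> V} \<subseteq> b" using Int by blast
    have "L1 \<inter> L2 \<in> B" using L1 L2 BA_Int by blast
    moreover have "{V. ultrafilter_of S B V \<and> L1 \<inter> L2 \<in> V} \<subseteq> a \<inter> b"
    proof
      fix V assume V: "V \<in> {V. ultrafilter_of S B V \<and> L1 \<inter> L2 \<in> V}"
      then have "L1 \<in> V" "L2 \<in> V" using uf_up[of V "L1 \<inter> L2"] L1 L2 by auto
      then show "V \<in> a \<inter> b" using V L1 L2 by blast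
    qed
    moreover have "L1 \<inter> L2 \<in> U"
      using Int.prems uf_Int L1 L2 by blast
    ultimately show ?case by blast
  next
    case (UN K)
    then obtain k where k: "k \<in> K" "U \<in> k" by blast
    then obtain L where "L \<in> B" "L \<in> U" "{V. ultrafilter_of S B V \<and> L \<in> V} \<subseteq> k"
      using UN.IH UN.prems(1) by blast
    then show ?case using k by blast
  next
    case (Basis s)
    then show ?case by blast
  qed
qed

lemma sd_compl: "L \<in> B \<Longrightarrow> topspace (stone_dual S B) - {U. ultrafilter_of S B U \<and> L \<in> U}
   = {U. ultrafilter_of S B U \<and> S - L \<in> U}"
  unfolding sd_topspace using uf_compl by blast

lemma sd_basic_closed: "L \<in> B \<Longrightarrow> closedin (stone_dual S B) {U. ultrafilter_of S B U \<and> L \<in> U}"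
  unfolding closedin_def using sd_compl sd_basic_open BA_diff sd_topspace by auto

lemma sd_Hausdorff: "Hausdorff_space (stone_dual S B)"
  unfolding Hausdorff_space_def
proof (intro allI impI)
  fix U V assume a: "U \<in> topspace (stone_dual S B) \<and> V \<in> topspace (stone_dual S B) \<and> U \<noteq> V"
  then have U: "ultrafilter_of S B U" and V: "ultrafilter_of S B V" and ne: "U \<noteq> V"
    unfolding sd_topspace by auto
  have "\<not> U \<subseteq> V" using uf_max[OF U V] ne by blast
  then obtain L where L: "L \<in> U" "L \<notin> V" by blast
  have LB: "L \<in> B" using uf_B[OF U L(1)] .
  have "S - L \<in> V" using uf_compl[OF V LB] L by blast
  show "\<exists>O1 O2. openin (stone_dual S B) O1 \<and> openin (stone_dual S B) O2 \<and> U \<in> O1 \<and> V \<in> O2 \<and> disjnt O1 O2"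
  proof (intro exI conjI)
    show "openin (stone_dual S B) {U. ultrafilter_of S B U \<and> L \<in> U}" using sd_basic_open LB .
    show "openin (stone_dual S B) {U. ultrafilter_of S B U \<and> S - L \<in> U}" using sd_basic_open BA_diff LB by blast
    show "U \<in> {U. ultrafilter_of S B U \<and> L \<in> U}" using U L by blast
    show "V \<in> {U. ultrafilter_of S B U \<and> S - L \<in> U}" using V \<open>S - L \<in> V\<close> by blast
    show "disjnt {U. ultrafilter_of S B U \<and> L \<in> U} {U. ultrafilter_of S B U \<and> S - L \<in> U}"
      unfolding disjnt_def using uf_compl LB by blast
  qed
qed

lemma sd_dim0: "stone_dual S B dim_le 0"
  unfolding dimension_le_0_neighbourhood_base_of_clopen neighbourhood_base_of
proof (intro allI impI)
  fix W U assume a: "openin (stone_dual S B) W \<and> U \<in> W"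
  then obtain L where L: "L \<in> B" "L \<in> U" "{V. ultrafilter_of S B V \<and> L \<in> V} \<subseteq> W"
    using sd_basis by blast
  have "U \<in> topspace (stone_dual S B)" using a openin_subset by blast
  then have "ultrafilter_of S B U" unfolding sd_topspace by blast
  then show "\<exists>U' V. openin (stone_dual S B) U' \<and> (closedin (stone_dual S B) V \<and> openin (stone_dual S B) V)
      \<and> U \<in> U' \<and> U' \<subseteq> V \<and> V \<subseteq> W"
    using L sd_basic_open sd_basic_closed by blast
qed

lemma sd_compact: "compact_space (stone_dual S B)"
  unfolding compact_space_alt
proof (intro allI impI)
  fix \<U> assume a: "(\<forall>W0\<in>\<U>. openin (stone_dual S B) W0) \<and> topspace (stone_dual S B) \<subseteq> \<Union>\<U>"
  define C where "C = {L \<in> B. \<exists>W0\<in>\<U>. {V. ultrafilter_of S B V \<and> L \<in> V} \<subseteq> W0}"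
  have "\<forall>V. ultrafilter_of S B V \<longrightarrow> (\<exists>L\<in>C. L \<in> V)"
  proof (intro allI impI)
    fix V assume V: "ultrafilter_of S B V"
    have "V \<in> \<Union>\<U>" using a V unfolding sd_topspace by auto
    then obtain W0 where W0: "W0 \<in> \<U>" "V \<in> W0" by auto
    have "openin (stone_dual S B) W0" using a W0 by auto
    from sd_basis[OF this W0(2)] obtain L where "L \<in> B" "L \<in> V" "{V. ultrafilter_of S B V \<and> L \<in> V} \<subseteq> W0"
      by blast
    then show "\<exists>L\<in>C. L \<in> V" unfolding C_def using W0 by blast
  qed
  moreover have CB: "C \<subseteq> B" unfolding C_def by blast
  ultimately obtain C' where C': "finite C'" "C' \<subseteq> C" "\<forall>V. ultrafilter_of S B V \<longrightarrow> (\<exists>L\<in>C'. L \<in> V)"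
    using uf_compactness[OF CB] by blast
  define f where "f L = (SOME W0. W0 \<in> \<U> \<and> {V. ultrafilter_of S B V \<and> L \<in> V} \<subseteq> W0)" for L
  have f: "f L \<in> \<U> \<and> {V. ultrafilter_of S B V \<and> L \<in> V} \<subseteq> f L" if "L \<in> C'" for L
  proof -
    have "\<exists>W0. W0 \<in> \<U> \<and> {V. ultrafilter_of S B V \<and> L \<in> V} \<subseteq> W0" using that C' unfolding C_def by blast
    then show ?thesis unfolding f_def by (rule someI_ex)
  qed
  show "\<exists>\<F>. finite \<F> \<and> \<F> \<subseteq> \<U> \<and> topspace (stone_dual S B) \<subseteq> \<Union>\<F>"
  proof (intro exI conjI)
    show "finite (f ` C')" using C'(1) by simp
    show "f ` C' \<subseteq> \<U>" using f by blast
    show "topspace (stone_dual S B) \<subseteq> \<Union>(f ` C')"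
    proof
      fix V assume "V \<in> topspace (stone_dual S B)"
      then have V: "ultrafilter_of S B V" unfolding sd_topspace by blast
      then obtain L where "L \<in> C'" "L \<in> V" using C' by blast
      then show "V \<in> \<Union>(f ` C')" using f[of L] V by blast
    qed
  qed
qed

end


context
  fixes Om :: "nat \<Rightarrow> 'f topology" and X :: "'x topology" and B :: "('f,'x) otrm set set"
  assumes BA: "boolean_subalgebra (terms Om X) B"
begin

definition box :: "nat \<Rightarrow> 'f set \<Rightarrow> ('f,'x) otrm set list \<Rightarrow> ('f \<times> ('f,'x) otrm list) set" where
  "box n K Ls = {(w', ts) \<in> op_domain Om X n. w' \<in> K \<and> (\<forall>i<n. ts ! i \<in> Ls ! i)}"

definition goodbox :: "nat \<Rightarrow> 'f \<Rightarrow> ('f,'x) otrm set set list \<Rightarrow> ('f \<times> ('f,'x) otrm list) set \<Rightarrow> bool" where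
  "goodbox n w Us Y \<longleftrightarrow> (\<exists>K Ls. closedin (Om n) K \<and> openin (Om n) K \<and> length Ls = n \<and> set Ls \<subseteq> B \<and>
      w \<in> K \<and> (\<forall>i<n. Ls ! i \<in> Us ! i) \<and> box n K Ls \<subseteq> Y)"

lemma gb_mono: "goodbox n w Us Y \<Longrightarrow> Y \<subseteq> Z \<Longrightarrow> goodbox n w Us Z"
proof -
  assume "goodbox n w Us Y" "Y \<subseteq> Z"
  then obtain K Ls where "closedin (Om n) K \<and> openin (Om n) K \<and> length Ls = n \<and> set Ls \<subseteq> B \<and>
      w \<in> K \<and> (\<forall>i<n. Ls ! i \<in> Us ! i) \<and> box n K Ls \<subseteq> Y" unfolding goodbox_def by blast
  then show ?thesis unfolding goodbox_def using \<open>Y \<subseteq> Z\<close>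
    by (intro exI[of _ K] exI[of _ Ls]) auto
qed

lemma term_app: "w \<in> topspace (Om (length ts)) \<Longrightarrow> set ts \<subseteq> terms Om X \<Longrightarrow> App w ts \<in> terms Om X"
  by (rule terms.app) auto

context
  fixes n :: nat and w :: 'f and Us :: "('f,'x) otrm set set list"
  assumes w: "w \<in> topspace (Om n)" and lenUs: "length Us = n"
    and Us: "\<forall>U\<in>set Us. ultrafilter_of (terms Om X) B U"
begin

lemma Us_nth: "i < n \<Longrightarrow> ultrafilter_of (terms Om X) B (Us ! i)"
  using Us lenUs nth_mem by blast

lemma gb_Int:
  assumes "goodbox n w Us Y" "goodbox n w Us Z"
  shows "goodbox n w Us (Y \<inter> Z)"
proof -
  obtain K1 Ls1 where 1: "closedin (Om n) K1" "openin (Om n) K1" "length Ls1 = n" "set Ls1 \<subseteq> B"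
      "w \<in> K1" "\<forall>i<n. Ls1 ! i \<in> Us ! i" "box n K1 Ls1 \<subseteq> Y"
    using assms(1) unfolding goodbox_def by blast
  obtain K2 Ls2 where 2: "closedin (Om n) K2" "openin (Om n) K2" "length Ls2 = n" "set Ls2 \<subseteq> B"
      "w \<in> K2" "\<forall>i<n. Ls2 ! i \<in> Us ! i" "box n K2 Ls2 \<subseteq> Z"
    using assms(2) unfolding goodbox_def by blast
  define Ls where "Ls = map (\<lambda>i. Ls1 ! i \<inter> Ls2 ! i) [0..<n]"
  have len: "length Ls = n" unfolding Ls_def by simp
  have nth: "Ls ! i = Ls1 ! i \<inter> Ls2 ! i" if "i < n" for i unfolding Ls_def using that by simp
  have "set Ls \<subseteq> B"
  proof
    fix L assume "L \<in> set Ls"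
    then obtain i where i: "i < n" "L = Ls ! i" using len by (metis in_set_conv_nth)
    have "Ls1 ! i \<in> B" using 1(3,4) i(1) nth_mem by blast
    moreover have "Ls2 ! i \<in> B" using 2(3,4) i(1) nth_mem by blast
    ultimately show "L \<in> B" using i nth BA_Int[OF BA] by simp
  qed
  moreover have "\<forall>i<n. Ls ! i \<in> Us ! i"
    using 1(6) 2(6) nth uf_Int[OF BA Us_nth] by simp
  moreover have "box n (K1 \<inter> K2) Ls \<subseteq> Y \<inter> Z"
  proof -
    have "box n (K1 \<inter> K2) Ls \<subseteq> box n K1 Ls1" "box n (K1 \<inter> K2) Ls \<subseteq> box n K2 Ls2"
      unfolding box_def using nth by auto
    then show ?thesis using 1(7) 2(7) by blast
  qed
  ultimately show ?thesis unfolding goodbox_def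
    using 1 2 len by (intro exI[of _ "K1 \<inter> K2"] exI[of _ Ls]) auto
qed

lemma gb_full: "goodbox n w Us (op_domain Om X n)"
  unfolding goodbox_def
proof (intro exI[of _ "topspace (Om n)"] exI[of _ "replicate n (terms Om X)"] conjI)
  show "set (replicate n (terms Om X)) \<subseteq> B" using BA_S[OF BA] by (auto simp: set_replicate_conv_if)
  show "\<forall>i<n. replicate n (terms Om X) ! i \<in> Us ! i" using uf_S[OF BA Us_nth] by simp
qed (auto simp: w box_def)


lemma gb_gen:
  assumes K: "closedin (Om n) K" "openin (Om n) K" and Ls: "length Ls = n" "set Ls \<subseteq> B"
  shows "goodbox n w Us (box n K Ls) \<or> goodbox n w Us (op_domain Om X n - box n K Ls)"
proof (cases "w \<in> K \<and> (\<forall>i<n. Ls ! i \<in> Us ! i)")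
  case True
  then have "goodbox n w Us (box n K Ls)" unfolding goodbox_def using K Ls by blast
  then show ?thesis by blast
next
  case False
  note F = False
  show ?thesis
  proof (cases "w \<in> K")
    case False
    define K' where "K' = topspace (Om n) - K"
    have "closedin (Om n) K'" unfolding K'_def using K(2) by (simp add: closedin_diff)
    moreover have "openin (Om n) K'" unfolding K'_def using K(1) by (simp add: openin_diff)
    moreover have "box n K' (replicate n (terms Om X)) \<subseteq> op_domain Om X n - box n K Ls"
      unfolding box_def K'_def by auto
    moreover have "set (replicate n (terms Om X)) \<subseteq> B" using BA_S[OF BA] by (auto simp: set_replicate_conv_if)
    moreover have "\<forall>i<n. replicate n (terms Om X) ! i \<in> Us ! i" using uf_S[OF BA Us_nth] by simp
    moreover have "w \<in> K'" unfolding K'_def using w False by blast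
    ultimately have "goodbox n w Us (op_domain Om X n - box n K Ls)" unfolding goodbox_def
      by (intro exI[of _ K'] exI[of _ "replicate n (terms Om X)"]) auto
    then show ?thesis by blast
  next
    case True
    then obtain j where j: "j < n" "Ls ! j \<notin> Us ! j" using F by blast
    have LjB: "Ls ! j \<in> B" using Ls j(1) nth_mem by blast
    define Ls' where "Ls' = (replicate n (terms Om X))[j := terms Om X - Ls ! j]"
    have len': "length Ls' = n" unfolding Ls'_def by simp
    have "set Ls' \<subseteq> B"
    proof -
      have "set Ls' \<subseteq> insert (terms Om X - Ls ! j) (set (replicate n (terms Om X)))"
        unfolding Ls'_def by (rule set_update_subset_insert)
      moreover have "insert (terms Om X - Ls ! j) (set (replicate n (terms Om X))) \<subseteq> B"
        using BA_S[OF BA] BA_diff[OF BA LjB] by (auto simp: set_replicate_conv_if)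
      ultimately show ?thesis by (rule order_trans)
    qed
    moreover have "\<forall>i<n. Ls' ! i \<in> Us ! i"
    proof (intro allI impI)
      fix i assume i: "i < n"
      show "Ls' ! i \<in> Us ! i"
      proof (cases "i = j")
        case True
        then show ?thesis unfolding Ls'_def using i j uf_compl[OF BA Us_nth[OF j(1)] LjB] by simp
      next
        case False
        then show ?thesis unfolding Ls'_def using i uf_S[OF BA Us_nth[OF i]] by simp
      qed
    qed
    moreover have "box n (topspace (Om n)) Ls' \<subseteq> op_domain Om X n - box n K Ls"
    proof
      fix p assume p: "p \<in> box n (topspace (Om n)) Ls'"
      then obtain w' ts where pe: "p = (w', ts)" "(w', ts) \<in> op_domain Om X n" "\<forall>i<n. ts ! i \<in> Ls' ! i"
        unfolding box_def by blast
      have "Ls' ! j = terms Om X - Ls ! j" unfolding Ls'_def using j(1) by simp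
      then have "ts ! j \<in> terms Om X - Ls ! j" using pe(3) j(1) by metis
      then have "(w', ts) \<notin> box n K Ls" unfolding box_def using j(1) by blast
      then show "p \<in> op_domain Om X n - box n K Ls" using pe by blast
    qed
    ultimately have "goodbox n w Us (op_domain Om X n - box n K Ls)" unfolding goodbox_def
      using w len' by (intro exI[of _ "topspace (Om n)"] exI[of _ Ls']) auto
    then show ?thesis by blast
  qed
qed

lemma gb_Bprime:
  assumes "Y \<in> B_prime Om X B n"
  shows "goodbox n w Us Y \<or> goodbox n w Us (op_domain Om X n - Y)"
proof -
  define D where "D = op_domain Om X n"
  define C where "C = {Y. Y \<subseteq> D \<and> (goodbox n w Us Y \<or> goodbox n w Us (D - Y))}"
  have comp: "D - Y \<in> C" if "Y \<in> C" for Y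
  proof -
    have "D - (D - Y) = Y" using that unfolding C_def by blast
    then show ?thesis using that unfolding C_def by auto
  qed
  have un: "Y \<union> Z \<in> C" if "Y \<in> C" "Z \<in> C" for Y Z
  proof -
    have sub: "Y \<union> Z \<subseteq> D" using that unfolding C_def by blast
    show ?thesis
    proof (cases "goodbox n w Us Y \<or> goodbox n w Us Z")
      case True
      then have "goodbox n w Us (Y \<union> Z)" using gb_mono by blast
      then show ?thesis using sub unfolding C_def by blast
    next
      case False
      then have "goodbox n w Us (D - Y)" "goodbox n w Us (D - Z)" using that unfolding C_def by auto
      then have "goodbox n w Us ((D - Y) \<inter> (D - Z))" by (rule gb_Int)
      moreover have "(D - Y) \<inter> (D - Z) = D - (Y \<union> Z)" by blast
      ultimately show ?thesis using sub unfolding C_def by auto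
    qed
  qed
  have "boolean_subalgebra D C" unfolding boolean_subalgebra_def
  proof (intro conjI ballI)
    show "C \<subseteq> Pow D" unfolding C_def by blast
    show "D \<in> C" unfolding C_def D_def using gb_full by blast
    then show "{} \<in> C" using comp[of D] by simp
  next
    fix L assume "L \<in> C" then show "D - L \<in> C" by (rule comp)
  next
    fix L M assume LM: "L \<in> C" "M \<in> C"
    show "L \<union> M \<in> C" using un LM .
    have "D - ((D - L) \<union> (D - M)) \<in> C" using comp un LM by blast
    moreover have "D - ((D - L) \<union> (D - M)) = L \<inter> M" using LM unfolding C_def by blast
    ultimately show "L \<inter> M \<in> C" by simp
  qed
  moreover have "{{(w, ts) \<in> op_domain Om X n. w \<in> K \<and> (\<forall>i<n. ts ! i \<in> Ls ! i)} | K Ls.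
        closedin (Om n) K \<and> openin (Om n) K \<and> length Ls = n \<and> set Ls \<subseteq> B} \<subseteq> C"
  proof
    fix Y assume "Y \<in> {{(w, ts) \<in> op_domain Om X n. w \<in> K \<and> (\<forall>i<n. ts ! i \<in> Ls ! i)} | K Ls.
        closedin (Om n) K \<and> openin (Om n) K \<and> length Ls = n \<and> set Ls \<subseteq> B}"
    then obtain K Ls where KL: "closedin (Om n) K" "openin (Om n) K" "length Ls = n" "set Ls \<subseteq> B"
      and Y: "Y = box n K Ls" unfolding box_def by blast
    have "Y \<subseteq> D" unfolding Y box_def D_def by blast
    then show "Y \<in> C" using gb_gen[OF KL] unfolding C_def Y D_def by blast
  qed
  ultimately have "B_prime Om X B n \<subseteq> C"
    unfolding B_prime_def boolean_generated_def D_def by blast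
  then show ?thesis using assms unfolding C_def D_def by blast
qed


lemma B_sub_terms: "L \<in> B \<Longrightarrow> L \<subseteq> terms Om X"
  using BA_sub[OF BA] .

lemma gb_ue:
  assumes M: "M \<in> B" and gb: "goodbox n w Us {(w', ts) \<in> op_domain Om X n. App w' ts \<in> M}"
  shows "M \<in> ult_eval B w Us"
proof -
  obtain K Ls where KL: "closedin (Om n) K" "openin (Om n) K" "length Ls = n" "set Ls \<subseteq> B"
      "w \<in> K" "\<forall>i<n. Ls ! i \<in> Us ! i" "box n K Ls \<subseteq> {(w', ts) \<in> op_domain Om X n. App w' ts \<in> M}"
    using gb unfolding goodbox_def by blast
  have "{App w ts | ts. length ts = length Us \<and> (\<forall>i<length Us. ts ! i \<in> Ls ! i)} \<subseteq> M"
  proof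
    fix x assume "x \<in> {App w ts | ts. length ts = length Us \<and> (\<forall>i<length Us. ts ! i \<in> Ls ! i)}"
    then obtain ts where x: "x = App w ts" "length ts = n" "\<forall>i<n. ts ! i \<in> Ls ! i"
      using lenUs by blast
    have "set ts \<subseteq> terms Om X"
    proof
      fix t assume "t \<in> set ts"
      then obtain i where i: "i < n" "t = ts ! i" using x(2) by (metis in_set_conv_nth)
      have "Ls ! i \<in> B" using KL(3,4) i(1) nth_mem by blast
      then show "t \<in> terms Om X" using B_sub_terms x(3) i by blast
    qed
    then have "(w, ts) \<in> box n K Ls" unfolding box_def op_domain_def using w x KL(5) by auto
    then show "x \<in> M" using KL(7) x(1) by blast
  qed
  then show ?thesis unfolding ult_eval_def using M KL(3,6) lenUs by auto
qed

lemma E_compl: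
  "op_domain Om X n - {(w', ts) \<in> op_domain Om X n. App w' ts \<in> L} =
   {(w', ts) \<in> op_domain Om X n. App w' ts \<in> terms Om X - L}"
  unfolding op_domain_def using term_app by auto

lemma E_full:
  "{(w', ts) \<in> op_domain Om X n. App w' ts \<in> terms Om X} = op_domain Om X n"
  unfolding op_domain_def using term_app by auto

lemma ue_dich:
  assumes CS: "cond_star Om X B" and L: "L \<in> B"
  shows "L \<in> ult_eval B w Us \<or> terms Om X - L \<in> ult_eval B w Us"
proof -
  have "{(w', ts) \<in> op_domain Om X n. App w' ts \<in> L} \<in> B_prime Om X B n"
    using CS L unfolding cond_star_def by blast
  from gb_Bprime[OF this] show ?thesis
  proof
    assume "goodbox n w Us {(w', ts) \<in> op_domain Om X n. App w' ts \<in> L}"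
    then show ?thesis using gb_ue[OF L] by blast
  next
    assume "goodbox n w Us (op_domain Om X n - {(w', ts) \<in> op_domain Om X n. App w' ts \<in> L})"
    then have "goodbox n w Us {(w', ts) \<in> op_domain Om X n. App w' ts \<in> terms Om X - L}"
      by (simp only: E_compl)
    then show ?thesis using gb_ue[OF BA_diff[OF BA L]] by blast
  qed
qed

lemma ue_uf:
  assumes CS: "cond_star Om X B"
  shows "ultrafilter_of (terms Om X) B (ult_eval B w Us)"
  unfolding ultrafilter_of_def
proof (intro conjI ballI impI)
  show "ult_eval B w Us \<subseteq> B" unfolding ult_eval_def by blast
  show "terms Om X \<in> ult_eval B w Us"
    using gb_ue[OF BA_S[OF BA]] gb_full unfolding E_full by blast
  show "{} \<notin> ult_eval B w Us"
  proof
    assume "{} \<in> ult_eval B w Us"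
    then obtain Ls where Ls: "length Ls = n" "\<forall>i<n. Ls ! i \<in> Us ! i"
       "{App w ts | ts. length ts = n \<and> (\<forall>i<n. ts ! i \<in> Ls ! i)} \<subseteq> {}"
      unfolding ult_eval_def using lenUs by auto
    define ts where "ts = map (\<lambda>i. SOME t. t \<in> Ls ! i) [0..<n]"
    have "\<forall>i<n. ts ! i \<in> Ls ! i"
    proof (intro allI impI)
      fix i assume i: "i < n"
      have "Ls ! i \<noteq> {}" using uf_ne[OF BA Us_nth[OF i]] Ls(2) i by blast
      then have "(SOME t. t \<in> Ls ! i) \<in> Ls ! i" by (simp add: some_in_eq)
      then show "ts ! i \<in> Ls ! i" unfolding ts_def using i by simp
    qed
    moreover have "length ts = n" unfolding ts_def by simp
    ultimately show False using Ls(3) by blast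
  qed
next
  fix L M assume L: "L \<in> ult_eval B w Us" and M: "M \<in> B" and LM: "L \<subseteq> M"
  then show "M \<in> ult_eval B w Us" unfolding ult_eval_def by blast
next
  fix L M assume L: "L \<in> ult_eval B w Us" and M: "M \<in> ult_eval B w Us"
  obtain Ls1 where 1: "L \<in> B" "length Ls1 = n" "\<forall>i<n. Ls1 ! i \<in> Us ! i"
       "{App w ts | ts. length ts = n \<and> (\<forall>i<n. ts ! i \<in> Ls1 ! i)} \<subseteq> L"
    using L unfolding ult_eval_def using lenUs by auto
  obtain Ls2 where 2: "M \<in> B" "length Ls2 = n" "\<forall>i<n. Ls2 ! i \<in> Us ! i"
       "{App w ts | ts. length ts = n \<and> (\<forall>i<n. ts ! i \<in> Ls2 ! i)} \<subseteq> M"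
    using M unfolding ult_eval_def using lenUs by auto
  define Ls where "Ls = map (\<lambda>i. Ls1 ! i \<inter> Ls2 ! i) [0..<n]"
  have len: "length Ls = n" unfolding Ls_def by simp
  have nth: "Ls ! i = Ls1 ! i \<inter> Ls2 ! i" if "i < n" for i unfolding Ls_def using that by simp
  have "\<forall>i<n. Ls ! i \<in> Us ! i"
    using 1(3) 2(3) nth uf_Int[OF BA Us_nth] by simp
  moreover have "{App w ts | ts. length ts = n \<and> (\<forall>i<n. ts ! i \<in> Ls ! i)} \<subseteq> L \<inter> M"
    using 1(4) 2(4) nth by blast
  moreover have "L \<inter> M \<in> B" using 1(1) 2(1) BA_Int[OF BA] by blast
  ultimately show "L \<inter> M \<in> ult_eval B w Us" unfolding ult_eval_def using len lenUs by auto
next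
  fix L assume "L \<in> B"
  then show "L \<in> ult_eval B w Us \<or> terms Om X - L \<in> ult_eval B w Us" using ue_dich[OF CS] by blast
qed

lemma ue_iff:
  assumes CS: "cond_star Om X B" and L: "L \<in> B"
  shows "L \<in> ult_eval B w Us \<longleftrightarrow> goodbox n w Us {(w', ts) \<in> op_domain Om X n. App w' ts \<in> L}"
proof
  assume a: "L \<in> ult_eval B w Us"
  show "goodbox n w Us {(w', ts) \<in> op_domain Om X n. App w' ts \<in> L}"
  proof (rule ccontr)
    assume "\<not> ?thesis"
    moreover have "{(w', ts) \<in> op_domain Om X n. App w' ts \<in> L} \<in> B_prime Om X B n"
      using CS L unfolding cond_star_def by blast
    ultimately have "goodbox n w Us (op_domain Om X n - {(w', ts) \<in> op_domain Om X n. App w' ts \<in> L})"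
      using gb_Bprime by blast
    then have "goodbox n w Us {(w', ts) \<in> op_domain Om X n. App w' ts \<in> terms Om X - L}"
      by (simp only: E_compl)
    then have "terms Om X - L \<in> ult_eval B w Us" using gb_ue BA_diff[OF BA L] by blast
    then show False using a uf_compl[OF BA ue_uf[OF CS] L] by blast
  qed
next
  assume "goodbox n w Us {(w', ts) \<in> op_domain Om X n. App w' ts \<in> L}"
  then show "L \<in> ult_eval B w Us" using gb_ue L by blast
qed

end

lemma ev_cont:
  assumes CS: "cond_star Om X B"
  shows "continuous_map (prod_topology (Om n) (product_topology (\<lambda>_. stone_dual (terms Om X) B) {..<n}))
     (stone_dual (terms Om X) B) (\<lambda>(w, f). ult_eval B w (map f [0..<n]))"
proof -
  let ?A = "stone_dual (terms Om X) B"
  let ?P = "prod_topology (Om n) (product_topology (\<lambda>_. ?A) {..<n})"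
  let ?F = "\<lambda>(w, f). ult_eval B w (map f [0..<n])"
  let ?S = "{{U. ultrafilter_of (terms Om X) B U \<and> L \<in> U} | L. L \<in> B}"
  have tsA: "topspace ?A = {U. ultrafilter_of (terms Om X) B U}" using sd_topspace[OF BA] .
  have pt: "w \<in> topspace (Om n) \<and> length (map f [0..<n]) = n \<and>
      (\<forall>U\<in>set (map f [0..<n]). ultrafilter_of (terms Om X) B U) \<and>
      (\<forall>i<n. map f [0..<n] ! i = f i)"
    if "(w, f) \<in> topspace ?P" for w f
    using that by (auto simp: tsA PiE_def Pi_def)
  have ufF: "ultrafilter_of (terms Om X) B (?F p)" if "p \<in> topspace ?P" for p
  proof -
    obtain w f where p: "p = (w, f)" by fastforce
    show ?thesis using pt[of w f] that ue_uf[OF _ _ _ CS] unfolding p by auto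
  qed
  have "continuous_map ?P (topology_generated_by ?S) ?F"
  proof (rule continuous_on_generated_topo)
    show "?F ` topspace ?P \<subseteq> \<Union> ?S" using ufF uf_S[OF BA] BA_S[OF BA] by blast
  next
    fix V assume "V \<in> ?S"
    then obtain L where L: "L \<in> B" and V: "V = {U. ultrafilter_of (terms Om X) B U \<and> L \<in> U}" by blast
    show "openin ?P (?F -` V \<inter> topspace ?P)"
    proof (subst openin_subopen, intro ballI)
      fix p assume p: "p \<in> ?F -` V \<inter> topspace ?P"
      obtain w f where pe: "p = (w, f)" by fastforce
      have pw: "(w, f) \<in> topspace ?P" using p pe by blast
      note ptw = pt[OF pw]
      have "L \<in> ult_eval B w (map f [0..<n])" using p pe V by auto
      then have "goodbox n w (map f [0..<n]) {(w', ts) \<in> op_domain Om X n. App w' ts \<in> L}"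
        using ue_iff[OF _ _ _ CS L] ptw by blast
      then obtain K Ls where KL: "closedin (Om n) K" "openin (Om n) K" "length Ls = n" "set Ls \<subseteq> B"
          "w \<in> K" "\<forall>i<n. Ls ! i \<in> map f [0..<n] ! i"
          "box n K Ls \<subseteq> {(w', ts) \<in> op_domain Om X n. App w' ts \<in> L}"
        unfolding goodbox_def by blast
      have LsB: "Ls ! i \<in> B" if "i < n" for i using KL(3,4) that nth_mem by blast
      define N where "N = K \<times> (\<Pi>\<^sub>E i\<in>{..<n}. {U. ultrafilter_of (terms Om X) B U \<and> Ls ! i \<in> U})"
      show "\<exists>T. openin ?P T \<and> p \<in> T \<and> T \<subseteq> ?F -` V \<inter> topspace ?P"
      proof (intro exI conjI)
        have "openin (product_topology (\<lambda>_. ?A) {..<n})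
             (\<Pi>\<^sub>E i\<in>{..<n}. {U. ultrafilter_of (terms Om X) B U \<and> Ls ! i \<in> U})"
          unfolding openin_PiE_gen using sd_basic_open[OF BA LsB] by auto
        then show "openin ?P N" unfolding N_def openin_prod_Times_iff using KL(2) by blast
        show "p \<in> N" unfolding N_def pe using pw KL(5,6) ptw by (auto simp: PiE_def Pi_def tsA)
        show "N \<subseteq> ?F -` V \<inter> topspace ?P"
        proof
          fix q assume q: "q \<in> N"
          obtain w' g where qe: "q = (w', g)" by fastforce
          have w': "w' \<in> K" and g: "g \<in> (\<Pi>\<^sub>E i\<in>{..<n}. {U. ultrafilter_of (terms Om X) B U \<and> Ls ! i \<in> U})"
            using q qe N_def by auto
          have qt: "q \<in> topspace ?P" using w' g openin_subset[OF KL(2)] unfolding qe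
            by (auto simp: PiE_def Pi_def tsA)
          note ptq = pt[OF qt[unfolded qe]]
          have "goodbox n w' (map g [0..<n]) {(w', ts) \<in> op_domain Om X n. App w' ts \<in> L}"
            unfolding goodbox_def
            using KL(1,2,3,4,7) w' g ptq by (intro exI[of _ K] exI[of _ Ls]) (auto simp: PiE_def Pi_def)
          then have "L \<in> ult_eval B w' (map g [0..<n])"
            using ue_iff[OF _ _ _ CS L] ptq by blast
          then show "q \<in> ?F -` V \<inter> topspace ?P" using qt ufF[OF qt] V qe by auto
        qed
      qed
    qed
  qed
  then show ?thesis unfolding stone_dual_def .
qed


lemma principal_uf: "t \<in> terms Om X \<Longrightarrow> ultrafilter_of (terms Om X) B {L \<in> B. t \<in> L}"
  unfolding ultrafilter_of_def using BA_S[OF BA] BA_diff[OF BA] BA_Int[OF BA] by auto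

lemma principal_gen:
  assumes CS: "cond_star Om X B" and t: "t \<in> terms Om X"
  shows "{L \<in> B. t \<in> L} \<in> gen_subalg Om (ult_eval B) ((\<lambda>x. {L \<in> B. Var x \<in> L}) ` topspace X)"
  using t
proof (induction t rule: terms.induct)
  case (var x)
  then show ?case by (intro gen_subalg.base) blast
next
  case (app w ts)
  let ?U = "\<lambda>t. {L \<in> B. t \<in> L}"
  have tsT: "\<forall>t\<in>set ts. t \<in> terms Om X" using app.IH by blast
  have allU: "\<forall>U\<in>set (map ?U ts). ultrafilter_of (terms Om X) B U"
    using tsT principal_uf by auto
  have uf1: "ultrafilter_of (terms Om X) B (ult_eval B w (map ?U ts))"
    using ue_uf[OF app.hyps(1) _ allU CS] by simp
  have AppT: "App w ts \<in> terms Om X" using terms.app[OF app.hyps(1) tsT] .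
  have "ult_eval B w (map ?U ts) \<subseteq> ?U (App w ts)"
  proof
    fix L assume "L \<in> ult_eval B w (map ?U ts)"
    then obtain Ls where Ls: "L \<in> B" "length Ls = length ts" "\<forall>i<length ts. Ls ! i \<in> ?U (ts ! i)"
      "{App w ts' | ts'. length ts' = length ts \<and> (\<forall>i<length ts. ts' ! i \<in> Ls ! i)} \<subseteq> L"
      unfolding ult_eval_def by auto
    have "App w ts \<in> {App w ts' | ts'. length ts' = length ts \<and> (\<forall>i<length ts. ts' ! i \<in> Ls ! i)}"
      using Ls(3) by auto
    then show "L \<in> ?U (App w ts)" using Ls(1,4) by blast
  qed
  then have eq: "ult_eval B w (map ?U ts) = ?U (App w ts)"
    using uf_max[OF BA uf1 principal_uf[OF AppT]] by blast
  have "ult_eval B w (map ?U ts) \<in> gen_subalg Om (ult_eval B) ((\<lambda>x. {L \<in> B. Var x \<in> L}) ` topspace X)"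
    by (rule gen_subalg.op) (use app.hyps(1) app.IH in auto)
  then show ?case using eq by simp
qed

lemma gen_map:
  assumes CS: "cond_star Om X B" and op: "\<forall>L\<in>B. openin X {x \<in> topspace X. Var x \<in> L}"
  shows "generating_map Om X (stone_dual (terms Om X) B) (ult_eval B) (\<lambda>x. {L \<in> B. Var x \<in> L})"
  unfolding generating_map_def
proof
  let ?S = "{{U. ultrafilter_of (terms Om X) B U \<and> L \<in> U} | L. L \<in> B}"
  have "continuous_map X (topology_generated_by ?S) (\<lambda>x. {L \<in> B. Var x \<in> L})"
  proof (rule continuous_on_generated_topo)
    show "(\<lambda>x. {L \<in> B. Var x \<in> L}) ` topspace X \<subseteq> \<Union> ?S"
    proof
      fix U assume "U \<in> (\<lambda>x. {L \<in> B. Var x \<in> L}) ` topspace X"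
      then obtain x where x: "x \<in> topspace X" "U = {L \<in> B. Var x \<in> L}" by blast
      have "ultrafilter_of (terms Om X) B U" using principal_uf[OF terms.var[OF x(1)]] x(2) by simp
      then show "U \<in> \<Union> ?S" using uf_S[OF BA] BA_S[OF BA] by blast
    qed
  next
    fix V assume "V \<in> ?S"
    then obtain L where L: "L \<in> B" and V: "V = {U. ultrafilter_of (terms Om X) B U \<and> L \<in> U}" by blast
    have "(\<lambda>x. {L \<in> B. Var x \<in> L}) -` V \<inter> topspace X = {x \<in> topspace X. Var x \<in> L}"
      using principal_uf[OF terms.var] L unfolding V by auto
    then show "openin X ((\<lambda>x. {L \<in> B. Var x \<in> L}) -` V \<inter> topspace X)" using op L by simp
  qed
  then show "continuous_map X (stone_dual (terms Om X) B) (\<lambda>x. {L \<in> B. Var x \<in> L})"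
    unfolding stone_dual_def .
next
  let ?A = "stone_dual (terms Om X) B"
  let ?G = "gen_subalg Om (ult_eval B) ((\<lambda>x. {L \<in> B. Var x \<in> L}) ` topspace X)"
  show "?A closure_of ?G = topspace ?A"
  proof
    show "?A closure_of ?G \<subseteq> topspace ?A" by (rule closure_of_subset_topspace)
    show "topspace ?A \<subseteq> ?A closure_of ?G"
    proof
      fix V assume V: "V \<in> topspace ?A"
      show "V \<in> ?A closure_of ?G" unfolding closure_of_def
      proof (intro CollectI conjI allI impI)
        show "V \<in> topspace ?A" by fact
        fix T assume T: "V \<in> T \<and> openin ?A T"
        then obtain L where L: "L \<in> B" "L \<in> V" "{U. ultrafilter_of (terms Om X) B U \<and> L \<in> U} \<subseteq> T"
          using sd_basis[OF BA] by blast
        have Vuf: "ultrafilter_of (terms Om X) B V" using V sd_topspace[OF BA] by blast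
        then have "L \<noteq> {}" using uf_ne[OF BA] L(2) by blast
        then obtain t where t: "t \<in> L" by blast
        have tT: "t \<in> terms Om X" using t BA_sub[OF BA L(1)] by blast
        have "{M \<in> B. t \<in> M} \<in> ?G" using principal_gen[OF CS tT] .
        moreover have "{M \<in> B. t \<in> M} \<in> T" using L(1,3) t principal_uf[OF tT] by blast
        ultimately show "\<exists>y\<in>?G. y \<in> T" by blast
      qed
    qed
  qed
qed

end

theorem theorem5p5:
  fixes Om :: "nat \<Rightarrow> 'f topology" and X :: "'x topology" and B :: "('f,'x) otrm set set"
  assumes "boolean_subalgebra (terms Om X) B"
    and "cond_star Om X B"
  shows "(\<forall>n w Us. w \<in> topspace (Om n) \<and> length Us = n \<and> (\<forall>U\<in>set Us. ultrafilter_of (terms Om X) B U)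
            \<longrightarrow> ultrafilter_of (terms Om X) B (ult_eval B w Us))
    \<and> stone_top_algebra Om (stone_dual (terms Om X) B) (ult_eval B)
    \<and> ((\<forall>L\<in>B. openin X {x \<in> topspace X. Var x \<in> L}) \<longrightarrow>
         generating_map Om X (stone_dual (terms Om X) B) (ult_eval B) (\<lambda>x. {L \<in> B. Var x \<in> L}))"
proof (intro conjI allI impI)
  fix n w Us
  assume "w \<in> topspace (Om n) \<and> length Us = n \<and> (\<forall>U\<in>set Us. ultrafilter_of (terms Om X) B U)"
  then show "ultrafilter_of (terms Om X) B (ult_eval B w Us)"
    using ue_uf[OF assms(1) _ _ _ assms(2)] by blast
next
  show "stone_top_algebra Om (stone_dual (terms Om X) B) (ult_eval B)"
    unfolding stone_top_algebra_def
    using sd_compact[OF assms(1)] sd_Hausdorff[OF assms(1)] sd_dim0[OF assms(1)]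
      ev_cont[OF assms(1) assms(2)] by blast
next
  assume "\<forall>L\<in>B. openin X {x \<in> topspace X. Var x \<in> L}"
  then show "generating_map Om X (stone_dual (terms Om X) B) (ult_eval B) (\<lambda>x. {L \<in> B. Var x \<in> L})"
    using gen_map[OF assms(1) assms(2)] by blast
qed

end
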